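(* Let $n$ and $N$ be positive integers. Let $\mathcal{C}(N)$ be the set of partitions $\pi$ into distinct parts satisfying $\ell(\pi) \ge N > \ell(\pi) - s(\pi)$. Then \[ \sum_{\pi \in \mathcal{D}(n)\cap \mathcal{C}(N)} (-1)^{\#(\pi)-1} = \begin{cases} 1, & \text{if } N \mid n,\\ 0, & \text{if } N \nmid n.\end{cases} \]
   Context: $\mathcal{D}(n)$ denotes the set of all partitions of $n$ into distinct parts. For a partition $\pi$: $s(\pi)$ is its smallest part, $\ell(\pi)$ its largest part, and $\#(\pi)$ its number of parts. *)

theory Defs
  imports Main
begin

text \<open>A partition into distinct parts is represented by its (finite) set of parts,
  all positive. \<open>distinct_partitions n\<close> is the set D(n).\<close>

definition distinct_partitions :: "nat \<Rightarrow> nat set set" where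
  "distinct_partitions n = {P. finite P \<and> 0 \<notin> P \<and> \<Sum>P = n}"

definition smallest_part :: "nat set \<Rightarrow> nat" where
  "smallest_part P = Min P"

definition largest_part :: "nat set \<Rightarrow> nat" where
  "largest_part P = Max P"

definition num_parts :: "nat set \<Rightarrow> nat" where
  "num_parts P = card P"

text \<open>C(N): distinct-part partitions with l(pi) >= N > l(pi) - s(pi).
  (Nonemptiness is required so that s and l are defined.)\<close>
definition C_set :: "nat \<Rightarrow> nat set set" where
  "C_set N = {P. finite P \<and> 0 \<notin> P \<and> P \<noteq> {} \<and>
      largest_part P \<ge> N \<and> int N > int (largest_part P) - int (smallest_part P)}"

end

theory Submission imports Defs "HOL-Computational_Algebra.Polynomial" begin

lemma prod_neg_monom:
  "finite B \<Longrightarrow> (\<Prod>x\<in>B. - monom (1::int) x) = monom ((-1)^card B) (\<Sum>B)"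
  by (induction B rule: finite_induct) (auto simp: mult_monom minus_monom)

definition G :: "nat \<Rightarrow> nat \<Rightarrow> int poly" where
  "G N l = (\<Prod>j\<in>{l+1-N..<l}. 1 - monom 1 j)"

lemma monX: "monom (1::int) n = [:0,1:]^n"
  by (simp add: monom_altdef)

lemma G_step:
  assumes "N > 0" "N \<le> l+1"
  shows "G N (l+1) * (1 - monom 1 (l+1-N)) = G N l * (1 - monom 1 l)"
proof -
  have a: "{l+1-N..<l+1} = insert l {l+1-N..<l}" using assms by auto
  have b: "{l+1-N..<l+1} = insert (l+1-N) {l+1+1-N..<l+1}" using assms by auto
  have n1: "l+1-N \<notin> {l+1+1-N..<l+1}" using assms by auto
  have n2: "l \<notin> {l+1-N..<l}" by auto
  have "G N (l+1) * (1 - monom 1 (l+1-N)) = (\<Prod>j\<in>{l+1-N..<l+1}. 1 - monom 1 j)"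
    unfolding G_def b prod.insert[OF finite_atLeastLessThan n1] by (simp only: mult.commute)
  also have "\<dots> = G N l * (1 - monom 1 l)"
    unfolding G_def a prod.insert[OF finite_atLeastLessThan n2] by (simp only: mult.commute)
  finally show ?thesis .
qed

lemma telescope:
  assumes "N > 0"
  shows "(1 - monom 1 N) * (\<Sum>l\<in>{N..N-1+k}. monom 1 l * G N l)
         = G N (N+k) * (monom 1 N - monom 1 (N+k))"
proof (induction k)
  case 0
  then show ?case using assms by simp
next
  case (Suc k)
  have s: "{N..N-1+Suc k} = insert (N+k) {N..N-1+k}" using assms by auto
  have st: "G N (N+k+1) * (1 - monom 1 (k+1)) = G N (N+k) * (1 - monom 1 (N+k))"
    using G_step[OF assms, of "N+k"] assms by simp
  have "(1 - monom 1 N) * (\<Sum>l\<in>{N..N-1+Suc k}. monom 1 l * G N l)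
     = (1 - monom 1 N) * (monom 1 (N+k) * G N (N+k)) + G N (N+k) * (monom 1 N - monom 1 (N+k))"
    using assms Suc.IH by (subst s, subst sum.insert) (auto simp add: distrib_left)
  also have "\<dots> = monom 1 N * (G N (N+k) * (1 - monom 1 (N+k)))"
    by (simp add: monX algebra_simps power_add)
  also have "\<dots> = G N (N+Suc k) * (monom 1 N - monom 1 (N+Suc k))"
    by (simp only: st[symmetric]) (simp add: monX algebra_simps power_add)
  finally show ?case .
qed

lemma coeff_G:
  assumes "finite A"
  shows "coeff (\<Prod>j\<in>A. 1 - monom (1::int) j) m = (\<Sum>B\<in>{B\<in>Pow A. \<Sum>B = m}. (-1)^card B)"
proof -
  have "(\<Prod>j\<in>A. 1 - monom (1::int) j) = (\<Prod>j\<in>A. - monom (1::int) j + 1)" by simp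
  also have "\<dots> = (\<Sum>B\<in>Pow A. monom ((-1)^card B) (\<Sum>B))"
    using assms by (subst prod_add) (auto intro!: sum.cong simp: prod_neg_monom finite_subset)
  finally have "coeff (\<Prod>j\<in>A. 1 - monom (1::int) j) m = (\<Sum>B\<in>Pow A. if \<Sum>B = m then (-1)^card B else 0)"
    by (auto simp: coeff_sum intro!: sum.cong)
  also have "\<dots> = (\<Sum>B\<in>{B\<in>Pow A. \<Sum>B = m}. (-1)^card B)"
    using assms by (subst sum.inter_filter) auto
  finally show ?thesis .
qed

definition f :: "nat \<Rightarrow> nat \<Rightarrow> int" where
  "f N n = (\<Sum>l\<in>{N..n}. \<Sum>B\<in>{B\<in>Pow {l+1-N..<l}. \<Sum>B = n-l}. (-1)^card B)"

lemma coeffS: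
  assumes "n \<le> M"
  shows "coeff (\<Sum>l\<in>{N..M}. monom 1 l * G N l) n = f N n"
proof -
  have "coeff (\<Sum>l\<in>{N..M}. monom 1 l * G N l) n = (\<Sum>l\<in>{N..M}. if n < l then 0 else coeff (G N l) (n-l))"
    by (auto simp: coeff_sum coeff_monom_mult intro!: sum.cong)
  also have "\<dots> = (\<Sum>l\<in>{N..n}. coeff (G N l) (n-l))"
    using assms by (intro sum.mono_neutral_cong_right) auto
  also have "\<dots> = f N n"
    unfolding f_def G_def by (intro sum.cong refl coeff_G) auto
  finally show ?thesis .
qed

lemma coeffG_small:
  assumes "m < l+1-N"
  shows "coeff (G N l) m = (if m = 0 then 1 else 0)"
proof -
  have "{B\<in>Pow {l+1-N..<l}. \<Sum>B = m} = (if m = 0 then {{}} else {})"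
  proof -
    have *: "B = {}" if "B \<subseteq> {l+1-N..<l}" "\<Sum>B = m" for B
    proof (rule ccontr)
      assume "B \<noteq> {}"
      then obtain b where b: "b \<in> B" by auto
      have fin: "finite B" using that(1) finite_subset by blast
      have "b \<le> \<Sum>B" using member_le_sum[of b B "\<lambda>x. x"] b fin by auto
      moreover have "b \<ge> l+1-N" using b that(1) by auto
      ultimately show False using that(2) assms by auto
    qed
    show ?thesis
    proof (cases "m = 0")
      case True
      then show ?thesis using * by auto
    next
      case False
      have "{B\<in>Pow {l+1-N..<l}. \<Sum>B = m} = {}"
      proof (rule equals0I)
        fix B assume "B \<in> {B\<in>Pow {l+1-N..<l}. \<Sum>B = m}"
        then have "B \<subseteq> {l+1-N..<l}" "\<Sum>B = m" by auto
        with *[OF this] False show False by simp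
      qed
      then show ?thesis using False by simp
    qed
  qed
  then show ?thesis unfolding G_def by (subst coeff_G) auto
qed

lemma f_rec:
  assumes "N > 0" "N \<le> n"
  shows "f N n - f N (n-N) = (if n = N then 1 else 0)"
proof -
  define S where "S = (\<Sum>l\<in>{N..N-1+(n+1)}. monom 1 l * G N l)"
  have t: "(1 - monom 1 N) * S = G N (N+(n+1)) * (monom 1 N - monom 1 (N+(n+1)))"
    unfolding S_def by (rule telescope[OF assms(1)])
  have "coeff ((1 - monom 1 N) * S) n = coeff S n - coeff (monom 1 N * S) n"
    by (simp add: left_diff_distrib)
  also have "\<dots> = f N n - f N (n-N)"
    using assms unfolding S_def by (simp add: coeff_monom_mult coeffS)
  finally have l: "coeff ((1 - monom 1 N) * S) n = f N n - f N (n-N)" .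
  have "coeff (G N (N+(n+1)) * (monom 1 N - monom 1 (N+(n+1)))) n
       = coeff (monom 1 N * G N (N+(n+1))) n - coeff (monom 1 (N+(n+1)) * G N (N+(n+1))) n"
    by (simp add: right_diff_distrib mult.commute)
  also have "\<dots> = coeff (G N (N+(n+1))) (n-N)"
    using assms by (simp add: coeff_monom_mult)
  also have "\<dots> = (if n = N then 1 else 0)"
    using assms by (subst coeffG_small) auto
  finally show ?thesis using l t by simp
qed

lemma f_small: "n < N \<Longrightarrow> f N n = 0"
  unfolding f_def by simp

lemma f_closed:
  assumes "N > 0"
  shows "f N n = (if N dvd n \<and> n > 0 then 1 else 0)"
proof (induction n rule: less_induct)
  case (less n)
  show ?case
  proof (cases "n < N")
    case True
    then show ?thesis using f_small assms by (auto dest: dvd_imp_le)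
  next
    case False
    then have r: "f N n = f N (n-N) + (if n = N then 1 else 0)" using f_rec[OF assms, of n] False by linarith
    show ?thesis
    proof (cases "n = N")
      case True
      then show ?thesis using r f_small assms by simp
    next
      case F2: False
      have "f N (n-N) = (if N dvd (n-N) \<and> n-N > 0 then 1 else 0)" using less assms False by auto
      moreover have "N dvd (n-N) \<longleftrightarrow> N dvd n" using False by (simp add: dvd_minus_self)
      ultimately show ?thesis using r F2 False by auto
    qed
  qed
qed

lemma to_f:
  assumes "N > 0"
  shows "(\<Sum>P \<in> distinct_partitions n \<inter> C_set N. (-1::int) ^ (num_parts P - 1)) = f N n"
proof -
  define Sg where "Sg = (SIGMA l:{N..n}. {B\<in>Pow {l+1-N..<l}. \<Sum>B = n-l})"
  have "f N n = (\<Sum>(l,B)\<in>Sg. (-1::int)^card B)"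
    unfolding f_def Sg_def by (rule sum.Sigma) auto
  also have "\<dots> = (\<Sum>P \<in> distinct_partitions n \<inter> C_set N. (-1::int) ^ (num_parts P - 1))"
  proof (rule sum.reindex_bij_witness[where i="\<lambda>P. (Max P, P - {Max P})" and j="\<lambda>(l,B). insert l B"])
    fix a assume "a \<in> Sg"
    then obtain l B where a: "a = (l,B)" and l: "N \<le> l" "l \<le> n" and B: "B \<subseteq> {l+1-N..<l}" "\<Sum>B = n-l"
      unfolding Sg_def by auto
    have fin: "finite B" using B(1) finite_subset by blast
    have lB: "l \<notin> B" using B(1) by auto
    have mx: "Max (insert l B) = l" using fin B(1) by (intro Max_eqI) auto
    have mn: "l+1-N \<le> Min (insert l B)" using fin B(1) assms by (subst Min_ge_iff) auto
    show "(\<lambda>P. (Max P, P - {Max P})) ((\<lambda>(l,B). insert l B) a) = a"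
      using a mx lB by auto
    have "0 \<notin> insert l B" using l B(1) assms by auto
    moreover have "\<Sum>(insert l B) = n" using fin lB B(2) l by simp
    moreover have "int N > int l - int (Min (insert l B))" using mn l by linarith
    ultimately show "(\<lambda>(l,B). insert l B) a \<in> distinct_partitions n \<inter> C_set N"
      using a fin mx l unfolding distinct_partitions_def C_set_def largest_part_def smallest_part_def
      by auto
    show "(-1::int) ^ (num_parts ((\<lambda>(l,B). insert l B) a) - 1) = (case a of (l,B) \<Rightarrow> (-1::int)^card B)"
      using a fin lB unfolding num_parts_def by simp
  next
    fix P assume P: "P \<in> distinct_partitions n \<inter> C_set N"
    then have fin: "finite P" and ne: "P \<noteq> {}" and z: "0 \<notin> P" and sm: "\<Sum>P = n"
      and ge: "Max P \<ge> N" and lt: "int N > int (Max P) - int (Min P)"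
      unfolding distinct_partitions_def C_set_def largest_part_def smallest_part_def by auto
    define l where "l = Max P"
    have lP: "l \<in> P" unfolding l_def using fin ne by simp
    show "(\<lambda>(l,B). insert l B) ((\<lambda>P. (Max P, P - {Max P})) P) = P"
      using lP unfolding l_def by auto
    have "l \<le> n" using member_le_sum[of l P "\<lambda>x. x"] lP fin sm by auto
    moreover have "P - {l} \<subseteq> {l+1-N..<l}"
    proof
      fix x assume x: "x \<in> P - {l}"
      have "x \<le> l" using x fin unfolding l_def by auto
      moreover have "Min P \<le> x" using x fin by auto
      ultimately show "x \<in> {l+1-N..<l}" using x lt unfolding l_def by auto
    qed
    moreover have "\<Sum>(P - {l}) = n - l" using sum.remove[OF fin lP, of "\<lambda>x. x"] sm by simp
    ultimately show "(\<lambda>P. (Max P, P - {Max P})) P \<in> Sg"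
      unfolding Sg_def using ge unfolding l_def by auto
  qed
  finally show ?thesis by simp
qed

theorem mainTheorem2:
  fixes n N :: nat
  assumes "n > 0" and "N > 0"
  shows "(\<Sum>P \<in> distinct_partitions n \<inter> C_set N. (-1::int) ^ (num_parts P - 1))
         = (if N dvd n then 1 else 0)"
  using to_f[OF assms(2)] f_closed[OF assms(2)] assms(1) by simp

end
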